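(* Define a translation $A\mapsto A_{\neg\neg}$ from formulas of QHC to formulas of intuitionistic predicate calculus QH by recursion: atomic problems (including $\bot$) are unchanged; $0_{\neg\neg}=\bot$; each atomic proposition $p(t_1,\dots,t_n)\ne 0$ is sent to $\neg\neg\bar p(t_1,\dots,t_n)$, where $\bar p$ is a problem variable of the same arity assigned injectively to $p$ (and distinct from the problem variables of QHC); intuitionistic connectives and quantifiers are kept; classical $\land,\to,\forall$ become intuitionistic ($(p\to q)_{\neg\neg}=p_{\neg\neg}\to q_{\neg\neg}$, etc.); classical $\lor,\exists$ become intuitionistic and prefixed by $\neg\neg$: $(p\lor q)_{\neg\neg}=\neg\neg(p_{\neg\neg}\lor q_{\neg\neg})$, $(\exists x\,p)_{\neg\neg}=\neg\neg\exists x\,p_{\neg\neg}$; $(!p)_{\neg\neg}=p_{\neg\neg}$; $(?\alpha)_{\neg\neg}=\neg\neg\alpha_{\neg\neg}$. Then if $A_1,\dots,A_n\vdash_{\mathrm{QHC}} A$, we have $(A_1)_{\neg\neg},\dots,(A_n)_{\neg\neg}\vdash_{\mathrm{QH}} A_{\neg\neg}$.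
   Context: QHC is a two-sorted first-order calculus. Its only terms are individual variables. Every formula is either a problem (denoted by Greek letters $\alpha,\beta,\gamma,\dots$) or a proposition (denoted by Latin letters $p,q,\dots$). Atomic formulas are proposition variables $p(t_1,\dots,t_n)$ (of proposition type), problem variables $\pi(t_1,\dots,t_n)$ (of problem type), and the constants $0$ (a proposition, classical falsity) and $\bot$ (a problem, intuitionistic absurdity). Propositions are closed under the classical connectives $\land,\lor,\to$ and quantifiers $\exists,\forall$; problems are closed under the intuitionistic connectives $\land,\lor,\to$ and quantifiers $\exists,\forall$ (the same symbols are used, distinguished by the type of the arguments). $\neg p$ abbreviates $p\to 0$, $\neg\alpha$ abbreviates $\alpha\to\bot$, and $\leftrightarrow$ is defined as usual. There are two type-conversion operators: if $p$ is a proposition then $!p$ is a problem, and if $\alpha$ is a problem then $?\alpha$ is a proposition. Deductive system of QHC: all axioms and rules of classical predicate logic applied to all propositions; all postulates and rules of intuitionistic predicate logic applied to all problems; the rules $p\,/\,!p$ and $\alpha\,/\,?\alpha$; and the schemas $?!p\to p$; $\alpha\to\, !?\alpha$; $!(p\to q)\to(!p\to !q)$; $?(\alpha\to\beta)\to(?\alpha\to ?\beta)$; $!0\to\bot$; $?(\alpha\land\beta)\leftrightarrow ?\alpha\land ?\beta$; $?(\alpha\lor\beta)\leftrightarrow ?\alpha\lor ?\beta$; $?\bot\to 0$; $?\exists x\,\alpha(x)\leftrightarrow\exists x\,?\alpha(x)$; $?\forall x\,\alpha(x)\to\forall x\,?\alpha(x)$ (usual variable side conditions implicit). $\vdash A$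 means $A$ is derivable in QHC; $A\Rightarrow B$ means $\vdash A\to B$ and $A\Leftrightarrow B$ means $\vdash A\leftrightarrow B$ (with $A,B$ of the same type); $A\vdash B$ means $B$ is derivable in QHC from the premise $A$. Notation: $\Box p := ?!p$ (a proposition) and $\nabla\alpha := !?\alpha$ (a problem). QC and QH denote classical and intuitionistic predicate calculus. *)

theory Defs
  imports Main
begin

section \<open>Syntax of QHC\<close>

text \<open>Individual variables are natural numbers; the only terms are variables.
  Type variable a: names of proposition variables, b: names of problem variables.
  An atomic formula is a name applied to a list of variables (arity = length).\<close>

datatype ('a, 'b) qprop =
    PVar 'a "nat list"
  | Zero
  | PConj "('a, 'b) qprop" "('a, 'b) qprop"
  | PDisj "('a, 'b) qprop" "('a, 'b) qprop"
  | PImp "('a, 'b) qprop" "('a, 'b) qprop"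
  | PEx nat "('a, 'b) qprop"
  | PAll nat "('a, 'b) qprop"
  | Quest "('a, 'b) qprob"
and ('a, 'b) qprob =
    QVar 'b "nat list"
  | Bot
  | QConj "('a, 'b) qprob" "('a, 'b) qprob"
  | QDisj "('a, 'b) qprob" "('a, 'b) qprob"
  | QImp "('a, 'b) qprob" "('a, 'b) qprob"
  | QEx nat "('a, 'b) qprob"
  | QAll nat "('a, 'b) qprob"
  | Bang "('a, 'b) qprop"

datatype ('a, 'b) form = P "('a, 'b) qprop" | Q "('a, 'b) qprob"

definition PNeg where "PNeg p = PImp p Zero"
definition QNeg where "QNeg a = QImp a Bot"
definition PIff where "PIff p q = PConj (PImp p q) (PImp q p)"
definition QIff where "QIff a b = QConj (QImp a b) (QImp b a)"

definition rn :: "nat \<Rightarrow> nat \<Rightarrow> nat \<Rightarrow> nat" where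
  "rn x y v = (if v = x then y else v)"

primrec fvP :: "('a, 'b) qprop \<Rightarrow> nat set" and fvQ :: "('a, 'b) qprob \<Rightarrow> nat set" where
  "fvP (PVar p ts) = set ts"
| "fvP Zero = {}"
| "fvP (PConj p q) = fvP p \<union> fvP q"
| "fvP (PDisj p q) = fvP p \<union> fvP q"
| "fvP (PImp p q) = fvP p \<union> fvP q"
| "fvP (PEx x p) = fvP p - {x}"
| "fvP (PAll x p) = fvP p - {x}"
| "fvP (Quest a) = fvQ a"
| "fvQ (QVar q ts) = set ts"
| "fvQ Bot = {}"
| "fvQ (QConj a b) = fvQ a \<union> fvQ b"
| "fvQ (QDisj a b) = fvQ a \<union> fvQ b"
| "fvQ (QImp a b) = fvQ a \<union> fvQ b"
| "fvQ (QEx x a) = fvQ a - {x}"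
| "fvQ (QAll x a) = fvQ a - {x}"
| "fvQ (Bang p) = fvP p"

text \<open>substP x y A: replace the free occurrences of x by y (no renaming of bound
  variables; used only together with the side condition that y is free for x).\<close>
primrec substP :: "nat \<Rightarrow> nat \<Rightarrow> ('a, 'b) qprop \<Rightarrow> ('a, 'b) qprop"
  and substQ :: "nat \<Rightarrow> nat \<Rightarrow> ('a, 'b) qprob \<Rightarrow> ('a, 'b) qprob" where
  "substP x y (PVar p ts) = PVar p (map (rn x y) ts)"
| "substP x y Zero = Zero"
| "substP x y (PConj p q) = PConj (substP x y p) (substP x y q)"
| "substP x y (PDisj p q) = PDisj (substP x y p) (substP x y q)"
| "substP x y (PImp p q) = PImp (substP x y p) (substP x y q)"
| "substP x y (PEx z p) = (if z = x then PEx z p else PEx z (substP x y p))"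
| "substP x y (PAll z p) = (if z = x then PAll z p else PAll z (substP x y p))"
| "substP x y (Quest a) = Quest (substQ x y a)"
| "substQ x y (QVar q ts) = QVar q (map (rn x y) ts)"
| "substQ x y Bot = Bot"
| "substQ x y (QConj a b) = QConj (substQ x y a) (substQ x y b)"
| "substQ x y (QDisj a b) = QDisj (substQ x y a) (substQ x y b)"
| "substQ x y (QImp a b) = QImp (substQ x y a) (substQ x y b)"
| "substQ x y (QEx z a) = (if z = x then QEx z a else QEx z (substQ x y a))"
| "substQ x y (QAll z a) = (if z = x then QAll z a else QAll z (substQ x y a))"
| "substQ x y (Bang p) = Bang (substP x y p)"

primrec freeforP :: "nat \<Rightarrow> nat \<Rightarrow> ('a, 'b) qprop \<Rightarrow> bool"
  and freeforQ :: "nat \<Rightarrow> nat \<Rightarrow> ('a, 'b) qprob \<Rightarrow> bool" where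
  "freeforP y x (PVar p ts) = True"
| "freeforP y x Zero = True"
| "freeforP y x (PConj p q) = (freeforP y x p \<and> freeforP y x q)"
| "freeforP y x (PDisj p q) = (freeforP y x p \<and> freeforP y x q)"
| "freeforP y x (PImp p q) = (freeforP y x p \<and> freeforP y x q)"
| "freeforP y x (PEx z p) = (z = x \<or> ((z \<noteq> y \<or> x \<notin> fvP p) \<and> freeforP y x p))"
| "freeforP y x (PAll z p) = (z = x \<or> ((z \<noteq> y \<or> x \<notin> fvP p) \<and> freeforP y x p))"
| "freeforP y x (Quest a) = freeforQ y x a"
| "freeforQ y x (QVar q ts) = True"
| "freeforQ y x Bot = True"
| "freeforQ y x (QConj a b) = (freeforQ y x a \<and> freeforQ y x b)"
| "freeforQ y x (QDisj a b) = (freeforQ y x a \<and> freeforQ y x b)"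
| "freeforQ y x (QImp a b) = (freeforQ y x a \<and> freeforQ y x b)"
| "freeforQ y x (QEx z a) = (z = x \<or> ((z \<noteq> y \<or> x \<notin> fvQ a) \<and> freeforQ y x a))"
| "freeforQ y x (QAll z a) = (z = x \<or> ((z \<noteq> y \<or> x \<notin> fvQ a) \<and> freeforQ y x a))"
| "freeforQ y x (Bang p) = freeforP y x p"

section \<open>Deductive system of QHC\<close>

inductive cax :: "('a, 'b) qprop \<Rightarrow> bool" where
  "cax (PImp p (PImp q p))"
| "cax (PImp (PImp p (PImp q r)) (PImp (PImp p q) (PImp p r)))"
| "cax (PImp (PConj p q) p)"
| "cax (PImp (PConj p q) q)"
| "cax (PImp p (PImp q (PConj p q)))"
| "cax (PImp p (PDisj p q))"
| "cax (PImp q (PDisj p q))"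
| "cax (PImp (PImp p r) (PImp (PImp q r) (PImp (PDisj p q) r)))"
| "cax (PImp Zero p)"
| "cax (PImp (PNeg (PNeg p)) p)"
| "freeforP y x p \<Longrightarrow> cax (PImp (PAll x p) (substP x y p))"
| "freeforP y x p \<Longrightarrow> cax (PImp (substP x y p) (PEx x p))"

inductive iax :: "('a, 'b) qprob \<Rightarrow> bool" where
  "iax (QImp a (QImp b a))"
| "iax (QImp (QImp a (QImp b c)) (QImp (QImp a b) (QImp a c)))"
| "iax (QImp (QConj a b) a)"
| "iax (QImp (QConj a b) b)"
| "iax (QImp a (QImp b (QConj a b)))"
| "iax (QImp a (QDisj a b))"
| "iax (QImp b (QDisj a b))"
| "iax (QImp (QImp a c) (QImp (QImp b c) (QImp (QDisj a b) c)))"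
| "iax (QImp Bot a)"
| "freeforQ y x a \<Longrightarrow> iax (QImp (QAll x a) (substQ x y a))"
| "freeforQ y x a \<Longrightarrow> iax (QImp (substQ x y a) (QEx x a))"

inductive qhcax :: "('a, 'b) form \<Rightarrow> bool" where
  "qhcax (P (PImp (Quest (Bang p)) p))"
| "qhcax (Q (QImp a (Bang (Quest a))))"
| "qhcax (Q (QImp (Bang (PImp p q)) (QImp (Bang p) (Bang q))))"
| "qhcax (P (PImp (Quest (QImp a b)) (PImp (Quest a) (Quest b))))"
| "qhcax (Q (QImp (Bang Zero) Bot))"
| "qhcax (P (PIff (Quest (QConj a b)) (PConj (Quest a) (Quest b))))"
| "qhcax (P (PIff (Quest (QDisj a b)) (PDisj (Quest a) (Quest b))))"
| "qhcax (P (PImp (Quest Bot) Zero))"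
| "qhcax (P (PIff (Quest (QEx x a)) (PEx x (Quest a))))"
| "qhcax (P (PImp (Quest (QAll x a)) (PAll x (Quest a))))"

inductive qhc_deriv :: "('a, 'b) form set \<Rightarrow> ('a, 'b) form \<Rightarrow> bool" for G where
  prem: "A \<in> G \<Longrightarrow> qhc_deriv G A"
| cax: "cax p \<Longrightarrow> qhc_deriv G (P p)"
| iax: "iax a \<Longrightarrow> qhc_deriv G (Q a)"
| qhcax: "qhcax A \<Longrightarrow> qhc_deriv G A"
| mpP: "qhc_deriv G (P (PImp p q)) \<Longrightarrow> qhc_deriv G (P p) \<Longrightarrow> qhc_deriv G (P q)"
| mpQ: "qhc_deriv G (Q (QImp a b)) \<Longrightarrow> qhc_deriv G (Q a) \<Longrightarrow> qhc_deriv G (Q b)"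
| allP: "qhc_deriv G (P (PImp p q)) \<Longrightarrow> x \<notin> fvP p \<Longrightarrow> qhc_deriv G (P (PImp p (PAll x q)))"
| exP: "qhc_deriv G (P (PImp q p)) \<Longrightarrow> x \<notin> fvP p \<Longrightarrow> qhc_deriv G (P (PImp (PEx x q) p))"
| allQ: "qhc_deriv G (Q (QImp a b)) \<Longrightarrow> x \<notin> fvQ a \<Longrightarrow> qhc_deriv G (Q (QImp a (QAll x b)))"
| exQ: "qhc_deriv G (Q (QImp b a)) \<Longrightarrow> x \<notin> fvQ a \<Longrightarrow> qhc_deriv G (Q (QImp (QEx x b) a))"
| bang: "qhc_deriv G (P p) \<Longrightarrow> qhc_deriv G (Q (Bang p))"
| quest: "qhc_deriv G (Q a) \<Longrightarrow> qhc_deriv G (P (Quest a))"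

section \<open>Intuitionistic predicate calculus QH\<close>

datatype 'c hform =
    HVar 'c "nat list"
  | HBot
  | HConj "'c hform" "'c hform"
  | HDisj "'c hform" "'c hform"
  | HImp "'c hform" "'c hform"
  | HEx nat "'c hform"
  | HAll nat "'c hform"

definition HNeg where "HNeg a = HImp a HBot"

primrec fvH :: "'c hform \<Rightarrow> nat set" where
  "fvH (HVar q ts) = set ts"
| "fvH HBot = {}"
| "fvH (HConj a b) = fvH a \<union> fvH b"
| "fvH (HDisj a b) = fvH a \<union> fvH b"
| "fvH (HImp a b) = fvH a \<union> fvH b"
| "fvH (HEx x a) = fvH a - {x}"
| "fvH (HAll x a) = fvH a - {x}"

primrec substH :: "nat \<Rightarrow> nat \<Rightarrow> 'c hform \<Rightarrow> 'c hform" where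
  "substH x y (HVar q ts) = HVar q (map (rn x y) ts)"
| "substH x y HBot = HBot"
| "substH x y (HConj a b) = HConj (substH x y a) (substH x y b)"
| "substH x y (HDisj a b) = HDisj (substH x y a) (substH x y b)"
| "substH x y (HImp a b) = HImp (substH x y a) (substH x y b)"
| "substH x y (HEx z a) = (if z = x then HEx z a else HEx z (substH x y a))"
| "substH x y (HAll z a) = (if z = x then HAll z a else HAll z (substH x y a))"

primrec freeforH :: "nat \<Rightarrow> nat \<Rightarrow> 'c hform \<Rightarrow> bool" where
  "freeforH y x (HVar q ts) = True"
| "freeforH y x HBot = True"
| "freeforH y x (HConj a b) = (freeforH y x a \<and> freeforH y x b)"
| "freeforH y x (HDisj a b) = (freeforH y x a \<and> freeforH y x b)"
| "freeforH y x (HImp a b) = (freeforH y x a \<and> freeforH y x b)"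
| "freeforH y x (HEx z a) = (z = x \<or> ((z \<noteq> y \<or> x \<notin> fvH a) \<and> freeforH y x a))"
| "freeforH y x (HAll z a) = (z = x \<or> ((z \<noteq> y \<or> x \<notin> fvH a) \<and> freeforH y x a))"

inductive hax :: "'c hform \<Rightarrow> bool" where
  "hax (HImp a (HImp b a))"
| "hax (HImp (HImp a (HImp b c)) (HImp (HImp a b) (HImp a c)))"
| "hax (HImp (HConj a b) a)"
| "hax (HImp (HConj a b) b)"
| "hax (HImp a (HImp b (HConj a b)))"
| "hax (HImp a (HDisj a b))"
| "hax (HImp b (HDisj a b))"
| "hax (HImp (HImp a c) (HImp (HImp b c) (HImp (HDisj a b) c)))"
| "hax (HImp HBot a)"
| "freeforH y x a \<Longrightarrow> hax (HImp (HAll x a) (substH x y a))"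
| "freeforH y x a \<Longrightarrow> hax (HImp (substH x y a) (HEx x a))"

inductive qh_deriv :: "'c hform set \<Rightarrow> 'c hform \<Rightarrow> bool" for G where
  prem: "A \<in> G \<Longrightarrow> qh_deriv G A"
| ax: "hax a \<Longrightarrow> qh_deriv G a"
| mp: "qh_deriv G (HImp a b) \<Longrightarrow> qh_deriv G a \<Longrightarrow> qh_deriv G b"
| all: "qh_deriv G (HImp a b) \<Longrightarrow> x \<notin> fvH a \<Longrightarrow> qh_deriv G (HImp a (HAll x b))"
| ex: "qh_deriv G (HImp b a) \<Longrightarrow> x \<notin> fvH a \<Longrightarrow> qh_deriv G (HImp (HEx x b) a)"

section \<open>The translation A \<mapsto> A_{\<not>\<not>}\<close>

text \<open>QH problem variables are named by b + a: Inl \<pi> is the QHC problem variable \<pi>,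
  Inr p is the new problem variable p-bar (injective in p, disjoint from the Inl names,
  same arity since it is applied to the same argument list).\<close>
primrec nnP :: "('a, 'b) qprop \<Rightarrow> ('b + 'a) hform"
  and nnQ :: "('a, 'b) qprob \<Rightarrow> ('b + 'a) hform" where
  "nnP (PVar p ts) = HNeg (HNeg (HVar (Inr p) ts))"
| "nnP Zero = HBot"
| "nnP (PConj p q) = HConj (nnP p) (nnP q)"
| "nnP (PDisj p q) = HNeg (HNeg (HDisj (nnP p) (nnP q)))"
| "nnP (PImp p q) = HImp (nnP p) (nnP q)"
| "nnP (PEx x p) = HNeg (HNeg (HEx x (nnP p)))"
| "nnP (PAll x p) = HAll x (nnP p)"
| "nnP (Quest a) = HNeg (HNeg (nnQ a))"
| "nnQ (QVar q ts) = HVar (Inl q) ts"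
| "nnQ Bot = HBot"
| "nnQ (QConj a b) = HConj (nnQ a) (nnQ b)"
| "nnQ (QDisj a b) = HDisj (nnQ a) (nnQ b)"
| "nnQ (QImp a b) = HImp (nnQ a) (nnQ b)"
| "nnQ (QEx x a) = HEx x (nnQ a)"
| "nnQ (QAll x a) = HAll x (nnQ a)"
| "nnQ (Bang p) = nnP p"

fun nnF :: "('a, 'b) form \<Rightarrow> ('b + 'a) hform" where
  "nnF (P p) = nnP p"
| "nnF (Q a) = nnQ a"

end

theory Submission imports Defs begin

inductive pd :: "'c hform set \<Rightarrow> 'c hform set \<Rightarrow> 'c hform \<Rightarrow> bool" for G where
  hyp: "a \<in> H \<Longrightarrow> pd G H a"
| fromqh: "qh_deriv G a \<Longrightarrow> pd G H a"
| mp: "pd G H (HImp a b) \<Longrightarrow> pd G H a \<Longrightarrow> pd G H b"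

lemma pd_ax: "hax a \<Longrightarrow> pd G H a" by (intro pd.fromqh qh_deriv.ax)

lemma pd_qh: "pd G {} a \<Longrightarrow> qh_deriv G a"
  by (induction "{}::'a hform set" a rule: pd.induct) (auto intro: qh_deriv.mp)

lemma pd_id: "pd G H (HImp a a)"
proof -
  have 1: "pd G H (HImp (HImp a (HImp (HImp a a) a)) (HImp (HImp a (HImp a a)) (HImp a a)))"
    by (rule pd_ax, rule hax.intros)
  have 2: "pd G H (HImp a (HImp (HImp a a) a))" by (rule pd_ax, rule hax.intros)
  have 3: "pd G H (HImp a (HImp a a))" by (rule pd_ax, rule hax.intros)
  show ?thesis using pd.mp[OF pd.mp[OF 1 2] 3] .
qed

lemma deduct_aux: "pd G H' b \<Longrightarrow> H' = insert h H \<Longrightarrow> pd G H (HImp h b)"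
proof (induction rule: pd.induct)
  case (hyp a H')
  then show ?case
  proof (cases "a = h")
    case True then show ?thesis by (simp add: pd_id)
  next
    case False then have "a \<in> H" using hyp by auto
    then show ?thesis by (intro pd.mp[OF pd_ax[OF hax.intros(1)]] pd.hyp)
  qed
next
  case (fromqh a H')
  then show ?case by (intro pd.mp[OF pd_ax[OF hax.intros(1)]] pd.fromqh)
next
  case (mp H' a b)
  then show ?case by (meson pd.mp pd_ax hax.intros(2))
qed

lemma impI: "pd G (insert h H) b \<Longrightarrow> pd G H (HImp h b)"
  using deduct_aux by blast

lemma H: "a \<in> H \<Longrightarrow> pd G H a" by (rule pd.hyp)
lemma conjI: "pd G H a \<Longrightarrow> pd G H b \<Longrightarrow> pd G H (HConj a b)"
  by (rule pd.mp[OF pd.mp[OF pd_ax[OF hax.intros(5)]]])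
lemma conjE1: "pd G H (HConj a b) \<Longrightarrow> pd G H a"
  by (rule pd.mp[OF pd_ax[OF hax.intros(3)]])
lemma conjE2: "pd G H (HConj a b) \<Longrightarrow> pd G H b"
  by (rule pd.mp[OF pd_ax[OF hax.intros(4)]])
lemma disjI1: "pd G H a \<Longrightarrow> pd G H (HDisj a b)"
  by (rule pd.mp[OF pd_ax[OF hax.intros(6)]])
lemma disjI2: "pd G H b \<Longrightarrow> pd G H (HDisj a b)"
  by (rule pd.mp[OF pd_ax[OF hax.intros(7)]])
lemma disjE: "pd G H (HDisj a b) \<Longrightarrow> pd G (insert a H) c \<Longrightarrow> pd G (insert b H) c \<Longrightarrow> pd G H c"
  by (rule pd.mp[OF pd.mp[OF pd.mp[OF pd_ax[OF hax.intros(8)]]]]) (auto intro: impI)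
lemma botE: "pd G H HBot \<Longrightarrow> pd G H a"
  by (rule pd.mp[OF pd_ax[OF hax.intros(9)]])
lemma thmI: "qh_deriv G a \<Longrightarrow> pd G H a" by (rule pd.fromqh)


lemma pd_mono: "pd G H a \<Longrightarrow> H \<subseteq> H' \<Longrightarrow> pd G H' a"
  by (induction rule: pd.induct) (auto intro: pd.intros)

lemma mpI: "pd G H (HImp a b) \<Longrightarrow> pd G (insert c H) (HImp a b)"
  by (erule pd_mono) auto

abbreviation NN where "NN a \<equiv> HImp (HImp a HBot) HBot"

lemma dni: "pd G H (HImp a (NN a))"
  by (intro impI, rule pd.mp[of _ _ a], (rule H, simp)+)

lemma nn_mono: "pd G H (HImp a b) \<Longrightarrow> pd G H (HImp (NN a) (NN b))"
  apply (intro impI)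
  apply (rule pd.mp[of _ _ "HImp a HBot"])
   apply (rule H, simp)
  apply (rule impI)
  apply (rule pd.mp[of _ _ b])
   apply (rule H, simp)
  apply (rule pd.mp[of _ _ a])
   apply (erule pd_mono, blast)
  apply (rule H, simp)
  done

lemma comp: "pd G H (HImp a b) \<Longrightarrow> pd G H (HImp b c) \<Longrightarrow> pd G H (HImp a c)"
  apply (rule impI)
  apply (rule pd.mp[OF mpI[of _ _ b c]], assumption)
  apply (rule pd.mp[OF mpI[of _ _ a b]], assumption)
  apply (rule H, simp)
  done

lemma stab_lift: "pd G H (HImp (NN X) X) \<Longrightarrow> pd G H (HImp a X) \<Longrightarrow> pd G H (HImp (NN a) X)"
  by (rule comp[OF nn_mono]) 

lemma stab_nn: "pd G H (HImp (NN (NN a)) (NN a))"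
  apply (intro impI)
  apply (rule pd.mp[of _ _ "HImp (NN a) HBot" ])
   apply (rule H, simp)
  apply (rule impI)
  apply (rule pd.mp[of _ _ "HImp a HBot" ])
   apply (rule H, simp)
  apply (rule H, simp)
  done

lemma stab_bot: "pd G H (HImp (NN HBot) HBot)"
  apply (rule impI)
  apply (rule pd.mp[of _ _ "HImp HBot HBot"])
   apply (rule H, simp)
  apply (rule pd_id)
  done

lemma nnm: "pd G H (HImp a b) \<Longrightarrow> pd G H (NN a) \<Longrightarrow> pd G H (NN b)"
  by (rule pd.mp[OF nn_mono])

lemma proj1: "pd G H (HImp (HConj a b) a)" by (rule pd_ax, rule hax.intros)
lemma proj2: "pd G H (HImp (HConj a b) b)" by (rule pd_ax, rule hax.intros)
lemma inj1: "pd G H (HImp a (HDisj a b))" by (rule pd_ax, rule hax.intros)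
lemma inj2: "pd G H (HImp b (HDisj a b))" by (rule pd_ax, rule hax.intros)

lemma stab_conj: "pd G H (HImp (NN a) a) \<Longrightarrow> pd G H (HImp (NN b) b) \<Longrightarrow> pd G H (HImp (NN (HConj a b)) (HConj a b))"
proof -
  assume sa: "pd G H (HImp (NN a) a)" and sb: "pd G H (HImp (NN b) b)"
  let ?H = "insert (NN (HConj a b)) H"
  have h: "pd G ?H (NN (HConj a b))" by (rule H, simp)
  have "pd G ?H a" by (rule pd.mp[OF pd_mono[OF sa]], blast, rule nnm[OF proj1 h])
  moreover have "pd G ?H b" by (rule pd.mp[OF pd_mono[OF sb]], blast, rule nnm[OF proj2 h])
  ultimately show ?thesis by (intro impI conjI)
qed

lemma stab_imp: "pd G H (HImp (NN b) b) \<Longrightarrow> pd G H (HImp (NN (HImp a b)) (HImp a b))"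
  apply (intro impI)
  apply (rule pd.mp[of _ _ "NN b"])
   apply (rule pd_mono, assumption, blast)
  apply (rule impI)
  apply (rule pd.mp[of _ _ "HImp (HImp a b) HBot"])
   apply (rule H, simp)
  apply (rule impI)
  apply (rule pd.mp[of _ _ "b"])
   apply (rule H, simp)
  apply (rule pd.mp[of _ _ "a"])
   apply (rule H, simp)
  apply (rule H, simp)
  done

lemma nn_imp: "pd G H (HImp (NN (HImp a b)) (HImp (NN a) (NN b)))"
  apply (intro impI)
  apply (rule pd.mp[of _ _ "HImp (HImp a b) HBot"])
   apply (rule H, simp)
  apply (rule impI)
  apply (rule pd.mp[of _ _ "HImp a HBot"])
   apply (rule H, simp)
  apply (rule impI)
  apply (rule pd.mp[of _ _ "b"])
   apply (rule H, simp)
  apply (rule pd.mp[of _ _ "a"])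
   apply (rule H, simp)
  apply (rule H, simp)
  done

lemma nn_conj1: "pd G H (HImp (NN (HConj a b)) (HConj (NN a) (NN b)))"
proof -
  let ?H = "insert (NN (HConj a b)) H"
  have h: "pd G ?H (NN (HConj a b))" by (rule H, simp)
  show ?thesis by (intro impI conjI nnm[OF proj1 h] nnm[OF proj2 h])
qed

lemma nn_conj2: "pd G H (HImp (HConj (NN a) (NN b)) (NN (HConj a b)))"
  apply (intro impI)
  apply (rule pd.mp[of _ _ "HImp a HBot"])
   apply (rule conjE1[of _ _ _ "NN b"], rule H, simp)
  apply (rule impI)
  apply (rule pd.mp[of _ _ "HImp b HBot"])
   apply (rule conjE2[of _ _ "NN a"], rule H, simp)
  apply (rule impI)
  apply (rule pd.mp[of _ _ "HConj a b"])
   apply (rule H, simp)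
  apply (rule conjI, (rule H, simp)+)
  done

lemma nn_disj1: "pd G H (HImp (NN (HDisj a b)) (NN (HDisj (NN a) (NN b))))"
  apply (rule nn_mono, rule impI)
  apply (rule disjE[of _ _ a b], rule H, simp)
   apply (rule pd.mp[OF inj1], rule pd.mp[OF dni], rule H, simp)
  apply (rule pd.mp[OF inj2], rule pd.mp[OF dni], rule H, simp)
  done

lemma nn_disj2: "pd G H (HImp (NN (HDisj (NN a) (NN b))) (NN (HDisj a b)))"
  apply (rule stab_lift, rule stab_nn, rule impI)
  apply (rule disjE[of _ _ "NN a" "NN b"], rule H, simp)
   apply (rule nnm[OF inj1], rule H, simp)
  apply (rule nnm[OF inj2], rule H, simp)
  done

lemma disj_ax: "pd G H (HImp (NN r) r) \<Longrightarrow>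
   pd G H (HImp (HImp p r) (HImp (HImp q r) (HImp (NN (HDisj p q)) r)))"
  apply (rule impI, rule impI)
  apply (rule stab_lift)
    apply (rule pd_mono, assumption, blast)
   apply (rule impI, rule disjE[of _ _ p q], rule H, simp)
    apply (rule pd.mp[of _ _ p], rule H, simp, rule H, simp)
   apply (rule pd.mp[of _ _ q], rule H, simp, rule H, simp)
  done

lemma fv_nn: fixes p :: "('a,'b) qprop" and a :: "('a,'b) qprob" shows "fvH (nnP p) = fvP p" "fvH (nnQ a) = fvQ a"
  by (induct p and a) (auto simp: HNeg_def)

lemma subst_nn: fixes p :: "('a,'b) qprop" and a :: "('a,'b) qprob" shows "nnP (substP x y p) = substH x y (nnP p)" "nnQ (substQ x y a) = substH x y (nnQ a)"
  by (induct p and a) (auto simp: HNeg_def)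

lemma freefor_nn: fixes p :: "('a,'b) qprop" and a :: "('a,'b) qprob" shows "freeforH y x (nnP p) = freeforP y x p" "freeforH y x (nnQ a) = freeforQ y x a"
  by (induct p and a) (auto simp: HNeg_def fv_nn)

lemma substH_id: "substH x x a = a"
proof -
  have "map (rn x x) ts = ts" for ts by (induct ts) (auto simp: rn_def)
  then show ?thesis by (induct a) auto
qed

lemma freeforH_id: "freeforH x x a" by (induct a) auto

lemma all_inst: "qh_deriv G (HImp (HAll x a) a)"
  using qh_deriv.ax[OF hax.intros(10)[OF freeforH_id, of x a]] by (simp add: substH_id)

lemma ex_inst: "qh_deriv G (HImp a (HEx x a))"
  using qh_deriv.ax[OF hax.intros(11)[OF freeforH_id, of x a]] by (simp add: substH_id)

lemma stab_all: "qh_deriv G (HImp (NN a) a) \<Longrightarrow> qh_deriv G (HImp (NN (HAll x a)) (HAll x a))"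
  apply (rule qh_deriv.all)
   apply (rule pd_qh, rule stab_lift, rule thmI, assumption, rule thmI, rule all_inst)
  apply simp
  done

lemma stab_nnP: fixes p :: "('a,'b) qprop" and a :: "('a,'b) qprob" shows "qh_deriv G (HImp (NN (nnP p)) (nnP p))" "nnQ a = nnQ a"
proof (induct p and a)
  case (PVar x1 x2) then show ?case by (simp add: HNeg_def pd_qh stab_nn)
next
  case Zero then show ?case by (simp add: pd_qh stab_bot)
next
  case (PConj p q) then show ?case by (simp add: pd_qh stab_conj thmI)
next
  case (PDisj p q) then show ?case by (simp add: HNeg_def pd_qh stab_nn)
next
  case (PImp p q) then show ?case by (simp add: pd_qh stab_imp thmI)
next
  case (PEx x p) then show ?case by (simp add: HNeg_def pd_qh stab_nn)
next
  case (PAll x p) then show ?case by (simp add: stab_all)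
next
  case (Quest a) then show ?case by (simp add: HNeg_def pd_qh stab_nn)
qed auto

lemma stabP: "pd G H (HImp (NN (nnP p)) (nnP p))"
  by (rule thmI, rule stab_nnP)

lemma hx: "hax a \<Longrightarrow> qh_deriv G a" by (rule qh_deriv.ax)

lemma cax_nn: "cax p \<Longrightarrow> qh_deriv G (nnP p)"
  apply (erule cax.cases)
             apply (simp_all add: PNeg_def HNeg_def subst_nn)
             apply (rule hx, rule hax.intros)+
        apply (rule pd_qh, rule comp[OF inj1 dni])
       apply (rule pd_qh, rule comp[OF inj2 dni])
      apply (rule pd_qh, rule disj_ax[OF stabP])
     apply (rule hx, rule hax.intros)
    apply (rule pd_qh, rule stabP)
   apply (rule hx, rule hax.intros, simp add: freefor_nn)
  apply (rule pd_qh, rule comp[OF thmI dni], rule hx, rule hax.intros, simp add: freefor_nn)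
  done

lemma iax_nn: "iax a \<Longrightarrow> qh_deriv G (nnQ a)"
  apply (erule iax.cases)
            apply (simp_all add: subst_nn)
            apply (rule hx, rule hax.intros)+
   apply (simp add: freefor_nn)
  apply (rule hx, rule hax.intros, simp add: freefor_nn)
  done

lemma ex1: "qh_deriv G (HImp (NN (HEx x a)) (NN (HEx x (NN a))))"
  apply (rule pd_qh, rule nn_mono, rule thmI, rule qh_deriv.ex)
   apply (rule pd_qh, rule comp[OF dni thmI], rule ex_inst)
  apply simp
  done

lemma ex2: "qh_deriv G (HImp (NN (HEx x (NN a))) (NN (HEx x a)))"
  apply (rule pd_qh, rule stab_lift[OF stab_nn], rule thmI, rule qh_deriv.ex)
   apply (rule pd_qh, rule nn_mono, rule thmI, rule ex_inst)
  apply simp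
  done

lemma all1: "qh_deriv G (HImp (NN (HAll x a)) (HAll x (NN a)))"
  apply (rule qh_deriv.all)
   apply (rule pd_qh, rule nn_mono, rule thmI, rule all_inst)
  apply simp
  done

lemma qhcax_nn: "qhcax A \<Longrightarrow> qh_deriv G (nnF A)"
  apply (erule qhcax.cases)
           apply (simp_all add: PIff_def HNeg_def)
           apply (rule pd_qh, rule stabP)
          apply (rule pd_qh, rule dni)
         apply (rule pd_qh, rule pd_id)
        apply (rule pd_qh, rule nn_imp)
       apply (rule pd_qh, rule pd_id)
      apply (rule pd_qh, rule conjI[OF nn_conj1 nn_conj2])
     apply (rule pd_qh, rule conjI[OF nn_disj1 nn_disj2])
    apply (rule pd_qh, rule stab_bot)
   apply (rule pd_qh, rule conjI[OF thmI thmI], rule ex1, rule ex2)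
  apply (rule all1)
  done

theorem theorem3p4:
  fixes As :: "('a, 'b) form list" and A :: "('a, 'b) form"
  assumes "qhc_deriv (set As) A"
  shows "qh_deriv (nnF ` set As) (nnF A)"
  using assms
proof (induction rule: qhc_deriv.induct)
  case (prem A) then show ?case by (simp add: qh_deriv.prem)
next
  case (cax p) then show ?case by (simp add: cax_nn)
next
  case (iax a) then show ?case by (simp add: iax_nn)
next
  case (qhcax A) then show ?case by (simp add: qhcax_nn)
next
  case (mpP p q) then show ?case by (auto intro: qh_deriv.mp)
next
  case (mpQ a b) then show ?case by (auto intro: qh_deriv.mp)
next
  case (allP p q x) then show ?case by (auto intro: qh_deriv.all simp: fv_nn)
next
  case (exP q p x) then show ?case
    apply (simp add: HNeg_def)
    apply (rule pd_qh, rule stab_lift[OF stabP], rule thmI)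
    apply (rule qh_deriv.ex, simp, simp add: fv_nn)
    done
next
  case (allQ a b x) then show ?case by (auto intro: qh_deriv.all simp: fv_nn)
next
  case (exQ b a x) then show ?case by (auto intro: qh_deriv.ex simp: fv_nn)
next
  case (bang p) then show ?case by simp
next
  case (quest a) then show ?case
    by (simp add: HNeg_def) (rule pd_qh, rule pd.mp[OF dni], rule thmI)
qed
end
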